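(* Let $X$ be a locally convex space, let $A:X\rightrightarrows X^{*}$ be representable, and let $C\subset X$ be closed and convex. If $D(A)\cap\operatorname{int}C\neq\emptyset$, then $A+N_{C}$ is representable.
   Context: $X$ is a non-trivial Hausdorff locally convex space with topology $\tau$, $X^{*}$ its dual with weak-star topology $\omega^*$, $Z=X\times X^*$ with topology $\tau\times\omega^*$, $c(x,x^{*})=\langle x,x^{*}\rangle$. Operators are identified with their graphs; $D(A)$ is the domain. $N_C$ is the normal cone: $N_C(x)=\{x^*\mid\langle y-x,x^*\rangle\le0\ \forall y\in C\}$ for $x\in C$, $N_C(x)=\emptyset$ otherwise; $(A+N_C)(x)=Ax+N_C(x)$. $T$ is representable if there is a proper convex $\tau\times\omega^{*}$-lsc $h:Z\to\overline{\mathbb{R}}$ with $h\ge c$ and $\{z\mid h(z)=c(z)\}=\operatorname{Graph}T$. *)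

theory Defs
  imports "HOL-Analysis.Analysis"
begin

definition lcs :: "'a::real_vector topology \<Rightarrow> bool" where
  "lcs \<tau> \<longleftrightarrow>
     topspace \<tau> = UNIV \<and>
     Hausdorff_space \<tau> \<and>
     continuous_map (prod_topology \<tau> \<tau>) \<tau> (\<lambda>(x, y). x + y) \<and>
     continuous_map (prod_topology euclideanreal \<tau>) \<tau> (\<lambda>(t, x). t *\<^sub>R x) \<and>
     (\<forall>U. openin \<tau> U \<and> 0 \<in> U \<longrightarrow> (\<exists>V. openin \<tau> V \<and> convex V \<and> 0 \<in> V \<and> V \<subseteq> U))"

definition dual :: "'a::real_vector topology \<Rightarrow> ('a \<Rightarrow> real) set" where
  "dual \<tau> = {f. linear f \<and> continuous_map \<tau> euclideanreal f}"

definition wstar :: "'a::real_vector topology \<Rightarrow> ('a \<Rightarrow> real) topology" where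
  "wstar \<tau> = subtopology (product_topology (\<lambda>_. euclideanreal) UNIV) (dual \<tau>)"

definition Ztop :: "'a::real_vector topology \<Rightarrow> ('a \<times> ('a \<Rightarrow> real)) topology" where
  "Ztop \<tau> = prod_topology \<tau> (wstar \<tau>)"

definition coupling :: "'a \<times> ('a \<Rightarrow> real) \<Rightarrow> ereal" where
  "coupling z = ereal (snd z (fst z))"

definition zcomb :: "real \<Rightarrow> 'a::real_vector \<times> ('a \<Rightarrow> real) \<Rightarrow> 'a \<times> ('a \<Rightarrow> real) \<Rightarrow> 'a \<times> ('a \<Rightarrow> real)" where
  "zcomb t z w = (t *\<^sub>R fst z + (1 - t) *\<^sub>R fst w, \<lambda>y. t * snd z y + (1 - t) * snd w y)"

definition representable :: "'a::real_vector topology \<Rightarrow> ('a \<times> ('a \<Rightarrow> real)) set \<Rightarrow> bool" where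
  "representable \<tau> T \<longleftrightarrow>
     (\<exists>h :: 'a \<times> ('a \<Rightarrow> real) \<Rightarrow> ereal.
        \<comment> \<open>proper\<close>
        (\<forall>z\<in>topspace (Ztop \<tau>). h z \<noteq> -\<infinity>) \<and> (\<exists>z\<in>topspace (Ztop \<tau>). h z \<noteq> \<infinity>) \<and>
        \<comment> \<open>convex\<close>
        (\<forall>z\<in>topspace (Ztop \<tau>). \<forall>w\<in>topspace (Ztop \<tau>). \<forall>t::real. 0 < t \<and> t < 1 \<longrightarrow>
            h (zcomb t z w) \<le> ereal t * h z + ereal (1 - t) * h w) \<and>
        \<comment> \<open>lower semicontinuous w.r.t. tau x omega*\<close>
        (\<forall>r::real. closedin (Ztop \<tau>) {z \<in> topspace (Ztop \<tau>). h z \<le> ereal r}) \<and>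
        (\<forall>z\<in>topspace (Ztop \<tau>). coupling z \<le> h z) \<and>
        {z \<in> topspace (Ztop \<tau>). h z = coupling z} = T)"

definition normal_cone :: "'a::real_vector topology \<Rightarrow> 'a set \<Rightarrow> 'a \<Rightarrow> ('a \<Rightarrow> real) set" where
  "normal_cone \<tau> C x = (if x \<in> C then {f \<in> dual \<tau>. \<forall>y\<in>C. f (y - x) \<le> 0} else {})"

definition plus_normal :: "'a::real_vector topology \<Rightarrow> ('a \<times> ('a \<Rightarrow> real)) set \<Rightarrow> 'a set \<Rightarrow> ('a \<times> ('a \<Rightarrow> real)) set" where
  "plus_normal \<tau> A C = {(x, \<lambda>y. a y + n y) | x a n. (x, a) \<in> A \<and> n \<in> normal_cone \<tau> C x}"

end

theory Submission
  imports Defs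
begin


lemma lcs_top: "lcs \<tau> \<Longrightarrow> topspace \<tau> = UNIV" by (simp add: lcs_def)

lemma lcs_trans:
  assumes "lcs \<tau>" shows "continuous_map \<tau> \<tau> (\<lambda>x. x + c)"
proof -
  have a: "continuous_map (prod_topology \<tau> \<tau>) \<tau> (\<lambda>(x, y). x + y)" using assms by (simp add: lcs_def)
  have b: "continuous_map \<tau> (prod_topology \<tau> \<tau>) (\<lambda>x. (x, c))"
    using assms by (simp add: continuous_map_pairwise o_def lcs_def)
  from continuous_map_compose[OF b a] show ?thesis by (simp add: o_def)
qed

lemma lcs_scale:
  assumes "lcs \<tau>" shows "continuous_map \<tau> \<tau> (\<lambda>x. k *\<^sub>R x)"
proof -
  have a: "continuous_map (prod_topology euclideanreal \<tau>) \<tau> (\<lambda>(t, x). t *\<^sub>R x)" using assms by (simp add: lcs_def)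
  have b: "continuous_map \<tau> (prod_topology euclideanreal \<tau>) (\<lambda>x. (k, x))"
    using assms by (simp add: continuous_map_pairwise o_def lcs_def)
  from continuous_map_compose[OF b a] show ?thesis by (simp add: o_def)
qed

lemma lcs_ray:
  assumes "lcs \<tau>" shows "continuous_map euclideanreal \<tau> (\<lambda>t. t *\<^sub>R x)"
proof -
  have a: "continuous_map (prod_topology euclideanreal \<tau>) \<tau> (\<lambda>(t, x). t *\<^sub>R x)" using assms by (simp add: lcs_def)
  have b: "continuous_map euclideanreal (prod_topology euclideanreal \<tau>) (\<lambda>t. (t, x))"
    using assms by (simp add: continuous_map_pairwise o_def lcs_def)
  from continuous_map_compose[OF b a] show ?thesis by (simp add: o_def)
qed

lemma lcs_absorb:
  assumes "lcs \<tau>" "openin \<tau> V" "0 \<in> V"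
  shows "\<exists>s>0. s *\<^sub>R x \<in> V \<and> (- s) *\<^sub>R x \<in> V"
proof -
  have "openin euclideanreal {t \<in> topspace euclideanreal. t *\<^sub>R x \<in> V}"
    using openin_continuous_map_preimage[OF lcs_ray[OF assms(1)] assms(2)] .
  then have "open {t. t *\<^sub>R x \<in> V}" by simp
  moreover have "(0::real) \<in> {t. t *\<^sub>R x \<in> V}" using assms by simp
  ultimately obtain e where e: "e > 0" "\<And>y. dist y 0 < e \<Longrightarrow> y \<in> {t. t *\<^sub>R x \<in> V}"
    by (metis open_dist)
  show ?thesis
    apply (rule exI[of _ "e/2"]) using e(1) e(2)[of "e/2"] e(2)[of "-(e/2)"] by (simp add: dist_real_def)
qed

lemma linear_bdd_cont:
  fixes f :: "'a::real_vector \<Rightarrow> real"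
  assumes "lcs \<tau>" "openin \<tau> V" "0 \<in> V" "linear f" "\<forall>u\<in>V. f u \<le> M"
  shows "continuous_map \<tau> euclideanreal f"
proof -
  have M0: "M \<ge> 0" proof -
    have "f 0 = 0" using linear_0[OF assms(4)] .
    then show ?thesis using assms(3,5) by (metis)
  qed
  have loc: "\<exists>W. openin \<tau> W \<and> x \<in> W \<and> (\<forall>w\<in>W. \<bar>f w - f x\<bar> < e)" if "e > 0" for x e
  proof -
    define k where "k = (M + 1) / e"
    have k: "k > 0" using M0 that by (simp add: k_def)
    have c1: "continuous_map \<tau> \<tau> (\<lambda>w. k *\<^sub>R (w + (- x)))"
      using continuous_map_compose[OF lcs_trans[OF assms(1), of "-x"] lcs_scale[OF assms(1), of k]]
      by (simp add: o_def)
    have c2: "continuous_map \<tau> \<tau> (\<lambda>w. (-k) *\<^sub>R (w + (- x)))"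
      using continuous_map_compose[OF lcs_trans[OF assms(1), of "-x"] lcs_scale[OF assms(1), of "-k"]]
      by (simp add: o_def)
    define W where "W = {w \<in> topspace \<tau>. k *\<^sub>R (w + (- x)) \<in> V} \<inter> {w \<in> topspace \<tau>. (-k) *\<^sub>R (w + (- x)) \<in> V}"
    have "openin \<tau> W" unfolding W_def
      using openin_continuous_map_preimage[OF c1 assms(2)] openin_continuous_map_preimage[OF c2 assms(2)] by blast
    moreover have "x \<in> W" using assms lcs_top[OF assms(1)] by (simp add: W_def)
    moreover have "\<bar>f w - f x\<bar> < e" if "w \<in> W" for w
    proof -
      have A: "f (k *\<^sub>R (w + (- x))) \<le> M" "f ((-k) *\<^sub>R (w + (- x))) \<le> M" using that assms(5) by (auto simp: W_def)
      have lin: "f (c *\<^sub>R (w + (- x))) = c * (f w - f x)" for c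
        using assms(4) by (simp add: linear_add linear_scale linear_neg linear_diff)
      have "k * (f w - f x) \<le> M" "- k * (f w - f x) \<le> M" using A lin[of k] lin[of "-k"] by (simp_all del: scaleR_minus_left)
      then have "\<bar>k * (f w - f x)\<bar> \<le> M" unfolding abs_le_iff by (metis minus_mult_left)
      then have B: "k * \<bar>f w - f x\<bar> \<le> M" using k by (simp add: abs_mult)
      have E: "(M+1) * \<bar>f w - f x\<bar> = k * \<bar>f w - f x\<bar> * e" using \<open>e>0\<close> by (simp add: k_def)
      have "k * \<bar>f w - f x\<bar> * e \<le> M * e" using mult_right_mono[OF B, of e] \<open>e>0\<close> by simp
      then have "(M+1) * \<bar>f w - f x\<bar> \<le> M * e" using E by linarith
      then show ?thesis
      proof -
        assume C: "(M+1) * \<bar>f w - f x\<bar> \<le> M * e"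
        show ?thesis
        proof (rule ccontr)
          assume "\<not> \<bar>f w - f x\<bar> < e"
          then have "(M+1) * e \<le> (M+1) * \<bar>f w - f x\<bar>" using M0 by (intro mult_left_mono) auto
          with C have "(M+1) * e \<le> M * e" by linarith
          then show False using \<open>e>0\<close> by (simp add: algebra_simps)
        qed
      qed
    qed
    ultimately show ?thesis by blast
  qed
  show ?thesis unfolding continuous_map_def
  proof (intro conjI allI impI)
    show "f \<in> topspace \<tau> \<rightarrow> topspace euclideanreal" by simp
    fix U assume "openin euclideanreal U"
    then have oU: "open U" by simp
    show "openin \<tau> {x \<in> topspace \<tau>. f x \<in> U}"
    proof (subst openin_subopen, intro ballI)
      fix x assume x: "x \<in> {x \<in> topspace \<tau>. f x \<in> U}"
      have fxU: "f x \<in> U" using x by simp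
      obtain e where e: "e > 0" "\<And>y. dist y (f x) < e \<Longrightarrow> y \<in> U" using oU fxU unfolding open_dist by blast
      obtain W where W: "openin \<tau> W" "x \<in> W" "\<forall>w\<in>W. \<bar>f w - f x\<bar> < e" using loc[OF e(1)] by blast
      have "W \<subseteq> {x \<in> topspace \<tau>. f x \<in> U}" using W e(2) lcs_top[OF assms(1)] by (auto simp: dist_real_def)
      then show "\<exists>T. openin \<tau> T \<and> x \<in> T \<and> T \<subseteq> {x \<in> topspace \<tau>. f x \<in> U}" using W by blast
    qed
  qed
qed



abbreviation "PT \<equiv> product_topology (\<lambda>_::'a. euclideanreal) (UNIV::'a set)"

lemma proj_cont: "continuous_map PT euclideanreal (\<lambda>f. f x)"
  using continuous_map_product_projection[of x UNIV "\<lambda>_. euclideanreal"] by simp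

lemma closedin_PT_Inter:
  assumes "\<And>i. continuous_map PT euclideanreal (g i)"
    and "\<And>i. closed (S i)"
  shows "closedin PT {f. \<forall>i. g i f \<in> S i}"
proof -
  have c: "closedin PT {f \<in> topspace PT. g i f \<in> S i}" for i
    by (rule closedin_continuous_map_preimage[OF assms(1)]) (use assms(2) in simp)
  have "closedin PT (\<Inter> (range (\<lambda>i. {f \<in> topspace PT. g i f \<in> S i})))"
    by (rule closedin_Inter) (use c in auto)
  moreover have "\<Inter> (range (\<lambda>i. {f \<in> topspace PT. g i f \<in> S i})) = {f. \<forall>i. g i f \<in> S i}"
    by auto
  ultimately show ?thesis by simp
qed

lemma closedin_PT_linear:
  "closedin PT {f::'a::real_vector\<Rightarrow>real. linear f}"
proof -
  have c1: "closedin PT {f. \<forall>i. (\<lambda>(x,y) f. f (x+y) - f x - f y) i f \<in> {0..0}}"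
    by (rule closedin_PT_Inter) (auto intro!: continuous_map_diff proj_cont)
  have c2: "closedin PT {f. \<forall>i. (\<lambda>(c,x) f. f (c *\<^sub>R x) - c * f x) i f \<in> {0..0}}"
    by (rule closedin_PT_Inter) (auto intro!: continuous_map_diff continuous_map_real_mult proj_cont)
  have "{f::'a\<Rightarrow>real. linear f} = {f. \<forall>i. (\<lambda>(x,y) f. f (x+y) - f x - f y) i f \<in> {0..0}}
        \<inter> {f. \<forall>i. (\<lambda>(c,x) f. f (c *\<^sub>R x) - c * f x) i f \<in> {0..0}}"
    by (auto simp: linear_iff diff_eq_eq algebra_simps)
  then show ?thesis using c1 c2 by auto
qed

lemma closedin_PT_bdd:
  "closedin PT {f::'a\<Rightarrow>real. \<forall>u\<in>V. f u \<le> M}"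
proof -
  have "closedin PT {f. \<forall>i. (\<lambda>u f. if u \<in> V then f u else M) i f \<in> {..M}}"
    by (rule closedin_PT_Inter) (auto intro!: proj_cont)
  moreover have "{f. \<forall>i. (\<lambda>u f. if u \<in> V then f u else M) i f \<in> {..M}} = {f::'a\<Rightarrow>real. \<forall>u\<in>V. f u \<le> M}"
    by auto
  ultimately show ?thesis by simp
qed

lemma KK_compact:
  assumes lcs: "lcs \<tau>" and V: "openin \<tau> V" "0 \<in> V"
  shows "compactin (wstar \<tau>) {f \<in> dual \<tau>. \<forall>u\<in>V. f u \<le> M}"
proof -
  define L where "L = {f::'a\<Rightarrow>real. linear f} \<inter> {f. \<forall>u\<in>V. f u \<le> M}"
  have cL: "closedin PT L" unfolding L_def using closedin_PT_linear closedin_PT_bdd by blast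
  have "\<forall>x. \<exists>s>0. s *\<^sub>R x \<in> V \<and> (- s) *\<^sub>R x \<in> V" using lcs_absorb[OF lcs V] by blast
  then obtain s where s: "\<And>x. s x > 0" "\<And>x. s x *\<^sub>R x \<in> V" "\<And>x. (- s x) *\<^sub>R x \<in> V" by metis
  have sub: "L \<subseteq> PiE UNIV (\<lambda>x. {-(\<bar>M\<bar> / s x) .. \<bar>M\<bar> / s x})"
  proof
    fix f assume "f \<in> L"
    then have lf: "linear f" and b: "\<forall>u\<in>V. f u \<le> M" by (auto simp: L_def)
    have "f x \<in> {-(\<bar>M\<bar> / s x) .. \<bar>M\<bar> / s x}" for x
    proof -
      have "s x * f x \<le> M" "- s x * f x \<le> M" using b s(2,3)[of x] linear_scale[OF lf, of "s x" x] linear_scale[OF lf, of "- s x" x] by (auto simp del: scaleR_minus_left)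
      then have "s x * f x \<le> \<bar>M\<bar>" "s x * (- f x) \<le> \<bar>M\<bar>" by auto
      then have "f x \<le> \<bar>M\<bar> / s x" "- f x \<le> \<bar>M\<bar> / s x" using s(1)[of x]
        by (simp_all add: pos_le_divide_eq mult.commute)
      then show ?thesis by auto
    qed
    then show "f \<in> PiE UNIV (\<lambda>x. {-(\<bar>M\<bar> / s x) .. \<bar>M\<bar> / s x})" by (simp add: PiE_UNIV_domain)
  qed
  have "compactin PT (PiE UNIV (\<lambda>x. {-(\<bar>M\<bar> / s x) .. \<bar>M\<bar> / s x}))"
    by (simp add: compactin_PiE)
  then have cpL: "compactin PT L" using closed_compactin sub cL by blast
  have "L = {f \<in> dual \<tau>. \<forall>u\<in>V. f u \<le> M}"
    using linear_bdd_cont[OF lcs V] by (auto simp: L_def dual_def)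
  then show ?thesis using cpL by (simp add: wstar_def compactin_subtopology)
qed



definition lscf :: "'b topology \<Rightarrow> ('b \<Rightarrow> ereal) \<Rightarrow> bool" where
  "lscf T f \<longleftrightarrow> (\<forall>p\<in>topspace T. \<forall>r::real. ereal r < f p \<longrightarrow>
      (\<exists>N. openin T N \<and> p \<in> N \<and> (\<forall>q\<in>N. ereal r < f q)))"

lemma lscf_open:
  assumes "lscf T f" shows "openin T {p \<in> topspace T. ereal r < f p}"
proof (subst openin_subopen, intro ballI)
  fix p assume p: "p \<in> {p \<in> topspace T. ereal r < f p}"
  then obtain N where N: "openin T N" "p \<in> N" "\<forall>q\<in>N. ereal r < f q"
    using assms unfolding lscf_def by blast
  then show "\<exists>T'. openin T T' \<and> p \<in> T' \<and> T' \<subseteq> {p \<in> topspace T. ereal r < f p}"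
    using openin_subset[OF N(1)] by blast
qed

lemma lscf_closed:
  assumes "lscf T f" shows "closedin T {p \<in> topspace T. f p \<le> ereal r}"
proof -
  have "topspace T - {p \<in> topspace T. f p \<le> ereal r} = {p \<in> topspace T. ereal r < f p}" by auto
  then show ?thesis unfolding closedin_def using lscf_open[OF assms] by auto
qed

lemma closed_lscf:
  assumes "\<And>r. closedin T {p \<in> topspace T. f p \<le> ereal r}" shows "lscf T f"
  unfolding lscf_def
proof (intro ballI allI impI)
  fix p r assume p: "p \<in> topspace T" and r: "ereal r < f p"
  have "openin T (topspace T - {p \<in> topspace T. f p \<le> ereal r})" using assms[of r] by (simp add: closedin_def)
  then show "\<exists>N. openin T N \<and> p \<in> N \<and> (\<forall>q\<in>N. ereal r < f q)"
    using p r by (intro exI[of _ "topspace T - {p \<in> topspace T. f p \<le> ereal r}"]) auto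
qed

lemma lscf_compose:
  assumes "lscf T f" "continuous_map S T g" shows "lscf S (\<lambda>x. f (g x))"
  unfolding lscf_def
proof (intro ballI allI impI)
  fix p r assume p: "p \<in> topspace S" and r: "ereal r < f (g p)"
  have gp: "g p \<in> topspace T" using assms(2) p by (simp add: continuous_map_def Pi_iff)
  obtain N where N: "openin T N" "g p \<in> N" "\<forall>q\<in>N. ereal r < f q" using assms(1) gp r unfolding lscf_def by blast
  have "openin S {x \<in> topspace S. g x \<in> N}" using openin_continuous_map_preimage[OF assms(2) N(1)] .
  then show "\<exists>N. openin S N \<and> p \<in> N \<and> (\<forall>q\<in>N. ereal r < f (g q))"
    using N p by (intro exI[of _ "{x \<in> topspace S. g x \<in> N}"]) auto
qed

lemma ereal_split_lt:
  fixes a b :: ereal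
  assumes "ereal r < a + b" "a \<noteq> -\<infinity>" "b \<noteq> -\<infinity>"
  shows "\<exists>s t. s + t = r \<and> ereal s < a \<and> ereal t < b"
proof (cases a)
  case (real x)
  show ?thesis
  proof (cases b)
    case (real y)
    with \<open>a = ereal x\<close> assms(1) have "r < x + y" by simp
    then show ?thesis using \<open>a = ereal x\<close> real
      by (intro exI[of _ "x - (x + y - r)/2"] exI[of _ "y - (x + y - r)/2"]) auto
  next
    case PInf then show ?thesis using real by (intro exI[of _ "x - 1"] exI[of _ "r - (x - 1)"]) auto
  next
    case MInf then show ?thesis using assms by simp
  qed
next
  case PInf
  show ?thesis
  proof (cases b)
    case (real y)
    then show ?thesis using PInf by (intro exI[of _ "r - (y - 1)"] exI[of _ "y - 1"]) auto
  next
    case PInf then show ?thesis using \<open>a = \<infinity>\<close> by (intro exI[of _ "r"] exI[of _ "0"]) auto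
  next
    case MInf then show ?thesis using assms by simp
  qed
next
  case MInf then show ?thesis using assms by simp
qed

lemma lscf_add:
  assumes "lscf T f" "lscf T g" "\<And>p. p \<in> topspace T \<Longrightarrow> f p \<noteq> -\<infinity>" "\<And>p. p \<in> topspace T \<Longrightarrow> g p \<noteq> -\<infinity>"
  shows "lscf T (\<lambda>p. f p + g p)"
  unfolding lscf_def
proof (intro ballI allI impI)
  fix p r assume p: "p \<in> topspace T" and r: "ereal r < f p + g p"
  obtain s t where st: "s + t = r" "ereal s < f p" "ereal t < g p"
    using ereal_split_lt[OF r assms(3,4)[OF p]] by blast
  obtain N1 where N1: "openin T N1" "p \<in> N1" "\<forall>q\<in>N1. ereal s < f q" using assms(1) p st unfolding lscf_def by blast
  obtain N2 where N2: "openin T N2" "p \<in> N2" "\<forall>q\<in>N2. ereal t < g q" using assms(2) p st unfolding lscf_def by blast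
  have "ereal r < f q + g q" if "q \<in> N1 \<inter> N2" for q
  proof -
    have "ereal s + ereal t < f q + g q" using N1(3) N2(3) that by (intro ereal_add_strict_mono2) auto
    then show ?thesis using st(1) by simp
  qed
  then show "\<exists>N. openin T N \<and> p \<in> N \<and> (\<forall>q\<in>N. ereal r < f q + g q)"
    using N1 N2 by (intro exI[of _ "N1 \<inter> N2"]) auto
qed

lemma lscf_ind:
  assumes "closedin T {p \<in> topspace T. P p}"
  shows "lscf T (\<lambda>p. if P p then 0 else \<infinity>)"
  unfolding lscf_def
proof (intro ballI allI impI)
  fix p r assume p: "p \<in> topspace T" and r: "ereal r < (if P p then 0 else \<infinity>)"
  show "\<exists>N. openin T N \<and> p \<in> N \<and> (\<forall>q\<in>N. ereal r < (if P q then 0 else \<infinity>))"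
  proof (cases "P p")
    case True
    then have "r < 0" using r by simp
    then show ?thesis using p by (intro exI[of _ "topspace T"]) auto
  next
    case False
    have "openin T (topspace T - {p \<in> topspace T. P p})" using assms by (simp add: closedin_def)
    then show ?thesis using p False by (intro exI[of _ "topspace T - {p \<in> topspace T. P p}"]) auto
  qed
qed

lemma wstar_proj: "continuous_map (wstar \<tau>) euclideanreal (\<lambda>f. f x)"
  unfolding wstar_def by (rule continuous_map_from_subtopology[OF proj_cont])

lemma topspace_wstar [simp]: "topspace (wstar \<tau>) = dual \<tau>"
  by (simp add: wstar_def)

lemma topspace_Ztop [simp]: "topspace (Ztop \<tau>) = UNIV \<times> dual \<tau>" if "lcs \<tau>"
  using that by (simp add: Ztop_def lcs_def)

definition sigma :: "'a set \<Rightarrow> ('a \<Rightarrow> real) \<Rightarrow> ereal" where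
  "sigma C y = Sup ((\<lambda>c. ereal (y c)) ` C)"

lemma lscf_sigma: "lscf (wstar \<tau>) (sigma C)"
  unfolding lscf_def
proof (intro ballI allI impI)
  fix p r assume p: "p \<in> topspace (wstar \<tau>)" and r: "ereal r < sigma C p"
  then obtain c where c: "c \<in> C" "ereal r < ereal (p c)" unfolding sigma_def less_Sup_iff by blast
  have "openin (wstar \<tau>) {f \<in> topspace (wstar \<tau>). f c \<in> {r<..}}"
    using openin_continuous_map_preimage[OF wstar_proj, of "{r<..}" \<tau> c] by simp
  moreover have "ereal r < sigma C q" if "q \<in> {f \<in> topspace (wstar \<tau>). f c \<in> {r<..}}" for q
    unfolding sigma_def less_Sup_iff using that c by auto
  ultimately show "\<exists>N. openin (wstar \<tau>) N \<and> p \<in> N \<and> (\<forall>q\<in>N. ereal r < sigma C q)"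
    using p c by (intro exI[of _ "{f \<in> topspace (wstar \<tau>). f c \<in> {r<..}}"]) auto
qed



lemma div_aux: "b \<noteq> 0 \<Longrightarrow> a / (2 * b) * b = a / (2::real)"
  by (simp add: field_simps)

lemma real_fitz_aux:
  fixes p q r w H :: real
  assumes "\<And>t. 0 < t \<Longrightarrow> t < 1 \<Longrightarrow> t * (t * p + (1 - t) * q) + (1 - t) * (t * r + (1 - t) * w) \<le> t * H + (1 - t) * w"
  shows "q + r - w \<le> H"
proof (rule ccontr)
  define L where "L = q + r - w"
  assume "\<not> q + r - w \<le> H"
  then have d: "L - H > 0" by (simp add: L_def)
  have g: "t * (t*p + (1-t)*L - H) \<le> 0" if "0 < t" "t < 1" for t
  proof -
    have "t * (t*p + (1-t)*L - H) = t*(t*p + (1-t)*q) + (1-t)*(t*r + (1-t)* w) - (t*H + (1-t)* w)"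
      by (simp add: L_def algebra_simps)
    then show ?thesis using assms[OF that] by linarith
  qed
  have g2: "L - H \<le> t * (L - p)" if "0 < t" "t < 1" for t
  proof -
    have "t*p + (1-t)*L - H \<le> 0" using g[OF that] that by (simp add: mult_le_0_iff)
    then show ?thesis by (simp add: algebra_simps)
  qed
  define t where "t = min (1/2) ((L - H) / (2 * (\<bar>L - p\<bar> + 1)))"
  have "0 < (L - H) / (2 * (\<bar>L - p\<bar> + 1))" proof (intro divide_pos_pos)
    have "0 \<le> \<bar>L - p\<bar>" by simp
    then show "0 < 2 * (\<bar>L - p\<bar> + 1)" by (smt (verit))
  qed (use d in simp)
  then have t0: "0 < t" "t < 1" by (auto simp: t_def)
  have "t * (L - p) \<le> t * \<bar>L - p\<bar>" using t0 by (intro mult_left_mono) auto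
  also have "\<dots> \<le> ((L - H) / (2 * (\<bar>L - p\<bar> + 1))) * \<bar>L - p\<bar>"
    by (intro mult_right_mono) (auto simp: t_def)
  also have "\<dots> \<le> ((L - H) / (2 * (\<bar>L - p\<bar> + 1))) * (\<bar>L - p\<bar> + 1)"
    using d by (intro mult_left_mono) auto
  also have "\<dots> = (L - H) / 2"
  proof -
    have nz: "\<bar>L - p\<bar> + 1 \<noteq> 0" using abs_ge_zero[of "L - p"] by linarith
    then show ?thesis using div_aux by blast
  qed
  finally have "t * (L - p) \<le> (L - H)/2" .
  with g2[OF t0] have "L - H \<le> (L - H) / 2" by (rule order_trans)
  with d show False by (simp add: field_simps)
qed

lemma dual_0: "(\<lambda>_. 0) \<in> dual \<tau>"
  by (simp add: dual_def linear_zero)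

lemma dual_comb:
  assumes "f \<in> dual \<tau>" "g \<in> dual \<tau>"
  shows "(\<lambda>v. a * f v + b * g v) \<in> dual \<tau>"
proof -
  have "linear f" "linear g" "continuous_map \<tau> euclideanreal f" "continuous_map \<tau> euclideanreal g"
    using assms by (auto simp: dual_def)
  then show ?thesis unfolding dual_def
    by (auto simp: linear_iff algebra_simps intro!: continuous_map_add continuous_map_real_mult)
qed

lemma dual_diff:
  assumes "f \<in> dual \<tau>" "g \<in> dual \<tau>"
  shows "f - g \<in> dual \<tau>"
  using dual_comb[OF assms, of 1 "-1"] by (simp add: fun_diff_def)

lemma dual_add:
  assumes "f \<in> dual \<tau>" "g \<in> dual \<tau>"
  shows "(\<lambda>v. f v + g v) \<in> dual \<tau>"
  using dual_comb[OF assms, of 1 1] by simp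



locale sumset =
  fixes \<tau> :: "'a::real_vector topology" and A :: "('a \<times> ('a \<Rightarrow> real)) set" and C :: "'a set"
    and h :: "'a \<times> ('a \<Rightarrow> real) \<Rightarrow> ereal" and x0 :: 'a and a0 :: "'a \<Rightarrow> real" and V :: "'a set"
  assumes lcs: "lcs \<tau>"
    and Asub: "A \<subseteq> UNIV \<times> dual \<tau>"
    and h_nm: "\<forall>z\<in>topspace (Ztop \<tau>). h z \<noteq> -\<infinity>"
    and h_conv: "\<forall>z\<in>topspace (Ztop \<tau>). \<forall>w\<in>topspace (Ztop \<tau>). \<forall>t::real. 0 < t \<and> t < 1 \<longrightarrow>
            h (zcomb t z w) \<le> ereal t * h z + ereal (1 - t) * h w"
    and h_lsc: "\<forall>r::real. closedin (Ztop \<tau>) {z \<in> topspace (Ztop \<tau>). h z \<le> ereal r}"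
    and h_ge: "\<forall>z\<in>topspace (Ztop \<tau>). coupling z \<le> h z"
    and h_eq: "{z \<in> topspace (Ztop \<tau>). h z = coupling z} = A"
    and Ccl: "closedin \<tau> C" and Ccv: "convex C"
    and x0a0: "(x0, a0) \<in> A"
    and V: "openin \<tau> V" "0 \<in> V" "\<forall>u\<in>V. x0 + u \<in> C"
begin

lemma top_Z [simp]: "topspace (Ztop \<tau>) = UNIV \<times> dual \<tau>" using lcs by simp

lemma a0_dual: "a0 \<in> dual \<tau>" using x0a0 Asub by auto

lemma x0C: "x0 \<in> C" using V by force

lemma h_x0: "h (x0, a0) = ereal (a0 x0)"
  using x0a0 h_eq by (auto simp: coupling_def)

lemma dual_linear: "f \<in> dual \<tau> \<Longrightarrow> linear f" by (simp add: dual_def)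

lemma fitz:
  assumes w: "w \<in> dual \<tau>"
  shows "ereal (w x0 + a0 x - a0 x0) \<le> h (x, w)"
proof (cases "h (x, w)")
  case PInf then show ?thesis by simp
next
  case MInf then show ?thesis using h_nm w by auto
next
  case (real H)
  have lw: "linear w" and la: "linear a0" using w a0_dual by (auto simp: dual_linear)
  have "w x0 + a0 x - a0 x0 \<le> H"
  proof (rule real_fitz_aux[of "w x" "w x0" "a0 x" "a0 x0" H])
    fix t :: real assume t: "0 < t" "t < 1"
    let ?z = "zcomb t (x, w) (x0, a0)"
    have zt: "?z \<in> topspace (Ztop \<tau>)"
      using dual_comb[OF w a0_dual] by (simp add: zcomb_def)
    have "coupling ?z \<le> h ?z" using h_ge zt by blast
    also have "\<dots> \<le> ereal t * h (x, w) + ereal (1 - t) * h (x0, a0)"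
      using h_conv w a0_dual t by auto
    also have "\<dots> = ereal (t * H + (1 - t) * a0 x0)" using real h_x0 by simp
    finally have "coupling ?z \<le> ereal (t * H + (1 - t) * a0 x0)" .
    moreover have "coupling ?z = ereal (t * (t * w x + (1 - t) * w x0) + (1 - t) * (t * a0 x + (1 - t) * a0 x0))"
      using lw la by (simp add: coupling_def zcomb_def linear_add linear_scale)
    ultimately show "t * (t * w x + (1 - t) * w x0) + (1 - t) * (t * a0 x + (1 - t) * a0 x0) \<le> t * H + (1 - t) * a0 x0"
      by simp
  qed
  then show ?thesis using real by simp
qed

definition F :: "'a \<times> ('a \<Rightarrow> real) \<Rightarrow> ('a \<Rightarrow> real) \<Rightarrow> ereal" where
  "F z y = (if fst z \<in> C then 0 else \<infinity>) + (h (fst z, snd z - y) + sigma C y)"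

definition H :: "'a \<times> ('a \<Rightarrow> real) \<Rightarrow> ereal" where
  "H z = (INF y\<in>dual \<tau>. F z y)"

lemma sig_ge: "c \<in> C \<Longrightarrow> ereal (y c) \<le> sigma C y"
  unfolding sigma_def by (rule Sup_upper) auto

lemma sig_nm: "sigma C y \<noteq> -\<infinity>"
  using sig_ge[OF x0C, of y] by auto

lemma h_nm': "xs \<in> dual \<tau> \<Longrightarrow> h (x, xs) \<noteq> -\<infinity>"
  using h_nm by auto

lemma F_notC: "fst z \<notin> C \<Longrightarrow> snd z \<in> dual \<tau> \<Longrightarrow> y \<in> dual \<tau> \<Longrightarrow> F z y = \<infinity>"
  unfolding F_def using h_nm'[OF dual_diff[of "snd z" \<tau> y]] sig_nm[of y]
  by (cases "h (fst z, snd z - y)"; cases "sigma C y") auto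

lemma F_C: "fst z \<in> C \<Longrightarrow> F z y = h (fst z, snd z - y) + sigma C y"
  unfolding F_def by simp

lemma F_nm: "snd z \<in> dual \<tau> \<Longrightarrow> y \<in> dual \<tau> \<Longrightarrow> F z y \<noteq> -\<infinity>"
  using F_notC[of z y] F_C[of z y] h_nm'[OF dual_diff[of "snd z" \<tau> y]] sig_nm[of y]
  by (cases "fst z \<in> C"; cases "h (fst z, snd z - y)"; cases "sigma C y") auto

lemma ereal_sum_ge:
  fixes a b :: ereal
  assumes "ereal p \<le> a" "ereal q \<le> b"
  shows "ereal (p + q) \<le> a + b"
proof -
  have "ereal p + ereal q \<le> a + b" using assms by (rule add_mono)
  then show ?thesis by simp
qed

lemma F_ge_c:
  assumes "snd z \<in> dual \<tau>" "y \<in> dual \<tau>"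
  shows "coupling z \<le> F z y"
proof (cases "fst z \<in> C")
  case False then show ?thesis using F_notC assms by simp
next
  case True
  have "coupling (fst z, snd z - y) \<le> h (fst z, snd z - y)"
    using h_ge dual_diff[OF assms] by auto
  then have a: "ereal (snd z (fst z) - y (fst z)) \<le> h (fst z, snd z - y)" by (simp add: coupling_def)
  have "ereal ((snd z (fst z) - y (fst z)) + y (fst z)) \<le> F z y"
    unfolding F_C[OF True] by (rule ereal_sum_ge[OF a sig_ge[OF True]])
  then show ?thesis by (simp add: coupling_def)
qed

lemma F_bound:
  assumes "snd z \<in> dual \<tau>" "y \<in> dual \<tau>" "F z y \<le> ereal r"
  shows "fst z \<in> C" "\<forall>u\<in>V. y u \<le> r - snd z x0 - a0 (fst z) + a0 x0"
proof -
  show C: "fst z \<in> C" using F_notC assms by force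
  show "\<forall>u\<in>V. y u \<le> r - snd z x0 - a0 (fst z) + a0 x0"
  proof
    fix u assume u: "u \<in> V"
    have a: "ereal ((snd z - y) x0 + a0 (fst z) - a0 x0) \<le> h (fst z, snd z - y)"
      by (rule fitz[OF dual_diff[OF assms(1,2)]])
    have b: "ereal (y (x0 + u)) \<le> sigma C y" using V(3) u sig_ge by blast
    have "ereal (((snd z - y) x0 + a0 (fst z) - a0 x0) + y (x0 + u)) \<le> F z y"
      unfolding F_C[OF C] by (rule ereal_sum_ge[OF a b])
    then have "ereal (((snd z - y) x0 + a0 (fst z) - a0 x0) + y (x0 + u)) \<le> ereal r" using assms(3) by (rule order_trans)
    then have "((snd z - y) x0 + a0 (fst z) - a0 x0) + y (x0 + u) \<le> r" by (simp only: ereal_less_eq)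
    moreover have "y (x0 + u) = y x0 + y u" using dual_linear[OF assms(2)] by (simp add: linear_add)
    ultimately show "y u \<le> r - snd z x0 - a0 (fst z) + a0 x0" by simp
  qed
qed

abbreviation "PZ \<equiv> prod_topology (Ztop \<tau>) (wstar \<tau>)"

lemma cont_fstfst: "continuous_map PZ \<tau> (\<lambda>p. fst (fst p))"
proof -
  have "continuous_map PZ (Ztop \<tau>) fst" by (rule continuous_map_fst)
  moreover have "continuous_map (Ztop \<tau>) \<tau> fst" unfolding Ztop_def by (rule continuous_map_fst)
  ultimately show ?thesis using continuous_map_compose by (fastforce simp: o_def)
qed

lemma cont_proj2: "continuous_map PZ euclideanreal (\<lambda>p. snd (fst p) k)"
proof -
  have "continuous_map PZ (Ztop \<tau>) fst" by (rule continuous_map_fst)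
  moreover have "continuous_map (Ztop \<tau>) (wstar \<tau>) snd" unfolding Ztop_def by (rule continuous_map_snd)
  ultimately have "continuous_map PZ (wstar \<tau>) (\<lambda>p. snd (fst p))" using continuous_map_compose by (fastforce simp: o_def)
  then show ?thesis using continuous_map_compose[OF _ wstar_proj] by (fastforce simp: o_def)
qed

lemma cont_proj3: "continuous_map PZ euclideanreal (\<lambda>p. snd p k)"
  using continuous_map_compose[OF continuous_map_snd wstar_proj] by (fastforce simp: o_def)

lemma cont_phi: "continuous_map PZ (Ztop \<tau>) (\<lambda>p. (fst (fst p), snd (fst p) - snd p))"
proof -
  have "continuous_map PZ PT (\<lambda>p. snd (fst p) - snd p)"
    unfolding continuous_map_componentwise_UNIV
    by (auto intro!: continuous_map_diff cont_proj2 cont_proj3)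
  moreover have "(\<lambda>p. snd (fst p) - snd p) \<in> topspace PZ \<rightarrow> dual \<tau>"
    using dual_diff lcs by (auto simp: Ztop_def)
  ultimately have "continuous_map PZ (wstar \<tau>) (\<lambda>p. snd (fst p) - snd p)"
    unfolding wstar_def by (rule continuous_map_into_subtopology)
  then show ?thesis unfolding Ztop_def continuous_map_pairwise
    using cont_fstfst by (simp add: o_def Ztop_def)
qed

lemma lsc_F: "lscf PZ (\<lambda>p. F (fst p) (snd p))"
proof -
  have "closedin PZ {p \<in> topspace PZ. fst (fst p) \<in> C}"
    using closedin_continuous_map_preimage[OF cont_fstfst Ccl] lcs_top[OF lcs] by simp
  then have l1: "lscf PZ (\<lambda>p. if fst (fst p) \<in> C then 0 else \<infinity>)" by (rule lscf_ind)
  have "lscf (Ztop \<tau>) h" using h_lsc by (intro closed_lscf) auto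
  then have l2: "lscf PZ (\<lambda>p. h (fst (fst p), snd (fst p) - snd p))" by (rule lscf_compose[OF _ cont_phi])
  have l3: "lscf PZ (\<lambda>p. sigma C (snd p))" by (rule lscf_compose[OF lscf_sigma continuous_map_snd])
  have l23: "lscf PZ (\<lambda>p. h (fst (fst p), snd (fst p) - snd p) + sigma C (snd p))"
    by (rule lscf_add[OF l2 l3]) (auto simp: sig_nm intro!: h_nm' dual_diff)
  have nm: "h (fst (fst p), snd (fst p) - snd p) + sigma C (snd p) \<noteq> -\<infinity>" if "p \<in> topspace PZ" for p
  proof -
    have "h (fst (fst p), snd (fst p) - snd p) \<noteq> -\<infinity>" using that by (auto intro!: h_nm' dual_diff)
    then show ?thesis using sig_nm[of "snd p"] by simp
  qed
  have "lscf PZ (\<lambda>p. (if fst (fst p) \<in> C then 0 else \<infinity>) + (h (fst (fst p), snd (fst p) - snd p) + sigma C (snd p)))"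
    by (rule lscf_add[OF l1 l23]) (use nm in auto)
  then show ?thesis by (simp add: F_def)
qed

lemma lsc_slice:
  assumes "snd z \<in> dual \<tau>" shows "lscf (wstar \<tau>) (\<lambda>y. F z y)"
proof -
  have "continuous_map (wstar \<tau>) PZ (\<lambda>y. (z, y))"
    unfolding continuous_map_pairwise using assms lcs by (auto simp: o_def Ztop_def lcs_def mem_Times_iff)
  from lscf_compose[OF lsc_F this] show ?thesis by simp
qed

lemma H_ge_c: "snd z \<in> dual \<tau> \<Longrightarrow> coupling z \<le> H z"
  unfolding H_def by (rule INF_greatest) (rule F_ge_c)

lemma attain:
  assumes z: "snd z \<in> dual \<tau>"
  shows "\<exists>y\<in>dual \<tau>. F z y = H z"
proof (cases "H z = \<infinity>")
  case True
  have "H z \<le> F z (\<lambda>_. 0)" unfolding H_def by (rule INF_lower) (rule dual_0)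
  then show ?thesis using True dual_0 by force
next
  case False
  have "H z \<noteq> -\<infinity>" using H_ge_c[OF z] by (auto simp: coupling_def)
  with False obtain m where m: "H z = ereal m" by (cases "H z") auto
  show ?thesis
  proof (rule ccontr)
    assume "\<not> (\<exists>y\<in>dual \<tau>. F z y = H z)"
    moreover have "H z \<le> F z y" if "y \<in> dual \<tau>" for y unfolding H_def using that by (rule INF_lower)
    ultimately have gt: "ereal m < F z y" if "y \<in> dual \<tau>" for y using that m by force
    define Mb where "Mb = m + 1 - snd z x0 - a0 (fst z) + a0 x0"
    define K where "K = {f \<in> dual \<tau>. \<forall>u\<in>V. f u \<le> Mb}"
    have cK: "compactin (wstar \<tau>) K" unfolding K_def by (rule KK_compact[OF lcs V(1,2)])
    define Op where "Op n = {y \<in> topspace (wstar \<tau>). ereal (m + 1 / real (Suc n)) < F z y}" for n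
    have oO: "openin (wstar \<tau>) (Op n)" for n unfolding Op_def by (rule lscf_open[OF lsc_slice[OF z]])
    have cov: "K \<subseteq> \<Union> (range Op)"
    proof
      fix y assume y: "y \<in> K"
      then have yd: "y \<in> dual \<tau>" by (simp add: K_def)
      have "\<exists>n. ereal (m + 1 / real (Suc n)) < F z y"
      proof (cases "F z y")
        case (real v)
        with gt[OF yd] have "0 < v - m" by simp
        then obtain n where "inverse (real (Suc n)) < v - m" using reals_Archimedean by blast
        then show ?thesis using real by (intro exI[of _ n]) (simp add: field_simps)
      next
        case PInf then show ?thesis by simp
      next
        case MInf then show ?thesis using gt[OF yd] by simp
      qed
      then show "y \<in> \<Union> (range Op)" using yd by (auto simp: Op_def)
    qed
    obtain FF where FF: "finite FF" "FF \<subseteq> range Op" "K \<subseteq> \<Union> FF"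
      using compactinD[OF cK _ cov] oO by blast
    obtain N where N: "finite N" "FF = Op ` N" using finite_subset_image[OF FF(1,2)] by blast
    define n0 where "n0 = Max (insert 0 N)"
    have mono: "Op n \<subseteq> Op n0" if "n \<in> N" for n
    proof -
      have "n \<le> n0" using that N(1) by (simp add: n0_def)
      then have "1 / real (Suc n0) \<le> 1 / real (Suc n)" by (simp add: frac_le)
      then have "ereal (m + 1 / real (Suc n0)) \<le> ereal (m + 1 / real (Suc n))" by simp
      then show ?thesis unfolding Op_def using order.strict_trans1 by blast
    qed
    have KO: "K \<subseteq> Op n0" using FF(3) N(2) mono by auto
    define d where "d = min (1 / real (Suc n0)) 1"
    have d0: "d > 0" by (simp add: d_def)
    have "ereal (m + d) \<le> F z y" if y: "y \<in> dual \<tau>" for y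
    proof (cases "y \<in> K")
      case True
      then have "ereal (m + 1 / real (Suc n0)) < F z y" using KO by (auto simp: Op_def)
      moreover have "ereal (m + d) \<le> ereal (m + 1 / real (Suc n0))" by (simp add: d_def)
      ultimately show ?thesis by (meson order.strict_implies_order order_trans)
    next
      case False
      have "\<not> F z y \<le> ereal (m + 1)"
      proof
        assume "F z y \<le> ereal (m + 1)"
        from F_bound(2)[OF z y this] have "y \<in> K" using y by (simp add: K_def Mb_def)
        with False show False by simp
      qed
      moreover have "ereal (m + d) \<le> ereal (m + 1)" by (simp add: d_def)
      ultimately show ?thesis by (meson linorder_not_le order_trans order.strict_implies_order)
    qed
    then have "ereal (m + d) \<le> H z" unfolding H_def by (intro INF_greatest)
    with m d0 show False by simp
  qed
qed

lemma cont_g: "continuous_map (Ztop \<tau>) euclideanreal (\<lambda>z. snd z x0 + a0 (fst z))"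
proof -
  have c1: "continuous_map (Ztop \<tau>) euclideanreal (\<lambda>z. snd z x0)"
    using continuous_map_compose[OF continuous_map_snd wstar_proj] by (simp add: Ztop_def o_def)
  have "continuous_map \<tau> euclideanreal a0" using a0_dual by (simp add: dual_def)
  then have c2: "continuous_map (Ztop \<tau>) euclideanreal (\<lambda>z. a0 (fst z))"
    using continuous_map_compose[OF continuous_map_fst] by (fastforce simp: Ztop_def o_def)
  show ?thesis by (rule continuous_map_add[OF c1 c2])
qed

lemma lsc_H: "lscf (Ztop \<tau>) H"
  unfolding lscf_def
proof (intro ballI allI impI)
  fix z0 r assume z0: "z0 \<in> topspace (Ztop \<tau>)" and r: "ereal r < H z0"
  define g where "g z = snd z x0 + a0 (fst z)" for z
  define K where "K = {f \<in> dual \<tau>. \<forall>u\<in>V. f u \<le> r - g z0 + a0 x0 + 1}"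
  have cK: "compactin (wstar \<tau>) K" unfolding K_def by (rule KK_compact[OF lcs V(1,2)])
  define W where "W = {p \<in> topspace PZ. ereal r < F (fst p) (snd p)}"
  have oW: "openin PZ W" unfolding W_def by (rule lscf_open[OF lsc_F])
  have "H z0 \<le> F z0 y" if "y \<in> dual \<tau>" for y unfolding H_def using that by (rule INF_lower)
  then have "{z0} \<times> K \<subseteq> W" using r z0 by (force simp: W_def K_def intro: order.strict_trans2)
  from tube_lemma_right[OF oW cK z0 this] obtain U V' where
    UV: "openin (Ztop \<tau>) U" "openin (wstar \<tau>) V'" "z0 \<in> U" "K \<subseteq> V'" "U \<times> V' \<subseteq> W" by blast
  define N0 where "N0 = {z \<in> topspace (Ztop \<tau>). g z \<in> {g z0 - 1<..}}"
  have oN0: "openin (Ztop \<tau>) N0" unfolding N0_def g_def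
    by (rule openin_continuous_map_preimage[OF cont_g]) simp
  have "ereal r < H z" if z: "z \<in> U \<inter> N0" for z
  proof (rule ccontr)
    assume "\<not> ereal r < H z"
    then have Hz: "H z \<le> ereal r" by simp
    have zt: "z \<in> topspace (Ztop \<tau>)" using z by (simp add: N0_def)
    then have zd: "snd z \<in> dual \<tau>" by auto
    obtain y where y: "y \<in> dual \<tau>" "F z y = H z" using attain[OF zd] by blast
    have "F z y \<le> ereal r" using y Hz by simp
    from F_bound(2)[OF zd y(1) this] have "\<forall>u\<in>V. y u \<le> r - g z0 + a0 x0 + 1"
      using z by (fastforce simp: N0_def g_def)
    then have "y \<in> V'" using y(1) UV(4) by (auto simp: K_def)
    then have "(z, y) \<in> W" using UV(5) z by blast
    then have "ereal r < F z y" by (simp add: W_def)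
    with \<open>F z y \<le> ereal r\<close> show False by simp
  qed
  then show "\<exists>N. openin (Ztop \<tau>) N \<and> z0 \<in> N \<and> (\<forall>q\<in>N. ereal r < H q)"
    using UV oN0 z0 by (intro exI[of _ "U \<inter> N0"]) (auto simp: N0_def)
qed

lemma H_nm: "snd z \<in> dual \<tau> \<Longrightarrow> H z \<noteq> -\<infinity>"
  using H_ge_c[of z] by (auto simp: coupling_def)

lemma finite_parts:
  assumes zd: "snd z \<in> dual \<tau>" and y: "y \<in> dual \<tau>" and fin: "F z y = ereal v"
  shows "fst z \<in> C \<and> (\<exists>p q. h (fst z, snd z - y) = ereal p \<and> sigma C y = ereal q \<and> v = p + q)"
proof -
  have C: "fst z \<in> C" using F_notC[OF _ zd y] fin by force
  have a: "h (fst z, snd z - y) \<noteq> -\<infinity>" using h_nm'[OF dual_diff[OF zd y]] .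
  have b: "sigma C y \<noteq> -\<infinity>" by (rule sig_nm)
  have e: "h (fst z, snd z - y) + sigma C y = ereal v" using fin F_C[OF C] by simp
  show ?thesis using C a b e
    by (cases "h (fst z, snd z - y)"; cases "sigma C y") auto
qed

lemma sigma_comb:
  assumes "sigma C y1 = ereal q1" "sigma C y2 = ereal q2" "0 \<le> t" "t \<le> 1"
  shows "sigma C (\<lambda>v. t * y1 v + (1 - t) * y2 v) \<le> ereal (t * q1 + (1 - t) * q2)"
  unfolding sigma_def
proof (rule Sup_least, clarify)
  fix c assume c: "c \<in> C"
  have "y1 c \<le> q1" "y2 c \<le> q2" using sig_ge[OF c, of y1] sig_ge[OF c, of y2] assms by auto
  then have "t * y1 c + (1 - t) * y2 c \<le> t * q1 + (1 - t) * q2"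
    using assms by (intro add_mono mult_left_mono) auto
  then show "ereal (t * y1 c + (1 - t) * y2 c) \<le> ereal (t * q1 + (1 - t) * q2)" by simp
qed

lemma H_conv:
  assumes z: "z \<in> topspace (Ztop \<tau>)" and w: "w \<in> topspace (Ztop \<tau>)" and t: "0 < t" "t < 1"
  shows "H (zcomb t z w) \<le> ereal t * H z + ereal (1 - t) * H w"
proof -
  have zd: "snd z \<in> dual \<tau>" and wd: "snd w \<in> dual \<tau>" using z w by auto
  show ?thesis
  proof (cases "H z = \<infinity> \<or> H w = \<infinity>")
    case True
    have E: "ereal t * H z + ereal (1 - t) * H w = \<infinity>"
      using True t H_nm[OF zd] H_nm[OF wd]
      by (cases "H z"; cases "H w") (auto simp: ereal_mult_infty)
    show ?thesis unfolding E by simp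
  next
    case False
    obtain y1 where y1: "y1 \<in> dual \<tau>" "F z y1 = H z" using attain[OF zd] by blast
    obtain y2 where y2: "y2 \<in> dual \<tau>" "F w y2 = H w" using attain[OF wd] by blast
    obtain v1 where v1: "H z = ereal v1" using False H_nm[OF zd] by (cases "H z") auto
    obtain v2 where v2: "H w = ereal v2" using False H_nm[OF wd] by (cases "H w") auto
    obtain p1 q1 where P1: "fst z \<in> C" "h (fst z, snd z - y1) = ereal p1" "sigma C y1 = ereal q1" "v1 = p1 + q1"
      using finite_parts[OF zd y1(1)] y1(2) v1 by metis
    obtain p2 q2 where P2: "fst w \<in> C" "h (fst w, snd w - y2) = ereal p2" "sigma C y2 = ereal q2" "v2 = p2 + q2"
      using finite_parts[OF wd y2(1)] y2(2) v2 by metis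
    define y where "y = (\<lambda>v. t * y1 v + (1 - t) * y2 v)"
    have yd: "y \<in> dual \<tau>" unfolding y_def by (rule dual_comb[OF y1(1) y2(1)])
    let ?zc = "zcomb t z w"
    have Czc: "fst ?zc \<in> C" using P1(1) P2(1) t Ccv by (simp add: zcomb_def convex_def)
    have "H ?zc \<le> F ?zc y" unfolding H_def by (rule INF_lower[OF yd])
    also have "\<dots> = h (fst ?zc, snd ?zc - y) + sigma C y" by (rule F_C[OF Czc])
    also have "(fst ?zc, snd ?zc - y) = zcomb t (fst z, snd z - y1) (fst w, snd w - y2)"
      by (auto simp: zcomb_def y_def algebra_simps)
    also have "h (zcomb t (fst z, snd z - y1) (fst w, snd w - y2)) \<le> ereal t * ereal p1 + ereal (1 - t) * ereal p2"
    proof -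
      have "(fst z, snd z - y1) \<in> topspace (Ztop \<tau>)" "(fst w, snd w - y2) \<in> topspace (Ztop \<tau>)"
        using dual_diff[OF zd y1(1)] dual_diff[OF wd y2(1)] by auto
      then have "h (zcomb t (fst z, snd z - y1) (fst w, snd w - y2)) \<le> ereal t * h (fst z, snd z - y1) + ereal (1 - t) * h (fst w, snd w - y2)"
        using h_conv t by blast
      then show ?thesis using P1(2) P2(2) by simp
    qed
    also have "sigma C y \<le> ereal (t * q1 + (1 - t) * q2)"
      unfolding y_def using sigma_comb[OF P1(3) P2(3)] t by simp
    finally have "H ?zc \<le> ereal (t * p1 + (1 - t) * p2) + ereal (t * q1 + (1 - t) * q2)"
      by (simp add: add_mono)
    also have "\<dots> = ereal t * H z + ereal (1 - t) * H w"
      using v1 v2 P1(4) P2(4) by (simp add: algebra_simps)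
    finally show ?thesis .
  qed
qed

lemma H_eq_sub: "{z \<in> topspace (Ztop \<tau>). H z = coupling z} \<subseteq> plus_normal \<tau> A C"
proof clarify
  fix x xs assume xs: "(x, xs) \<in> topspace (Ztop \<tau>)" and eq: "H (x, xs) = coupling (x, xs)"
  let ?z = "(x, xs)"
  have zd: "xs \<in> dual \<tau>" using xs by auto
  obtain y where y: "y \<in> dual \<tau>" "F ?z y = H ?z" using attain[of ?z] zd by auto
  have Fv: "F ?z y = ereal (xs x)" using y eq by (simp add: coupling_def)
  obtain p q where P: "x \<in> C" "h (x, xs - y) = ereal p" "sigma C y = ereal q" "xs x = p + q"
    using finite_parts[of ?z y "xs x"] zd y(1) Fv by auto
  have "coupling (x, xs - y) \<le> h (x, xs - y)" using h_ge dual_diff[OF zd y(1)] by auto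
  then have p: "xs x - y x \<le> p" using P(2) by (simp add: coupling_def)
  have q: "y x \<le> q" using sig_ge[OF P(1), of y] P(3) by simp
  have pe: "p = xs x - y x" and qe: "q = y x" using p q P(4) by linarith+
  have inA: "(x, xs - y) \<in> A"
    using h_eq dual_diff[OF zd y(1)] P(2) pe by (auto simp: coupling_def)
  have "y \<in> normal_cone \<tau> C x"
  proof -
    have "y (c - x) \<le> 0" if c: "c \<in> C" for c
    proof -
      have "y c \<le> q" using sig_ge[OF c, of y] P(3) by simp
      moreover have "y (c - x) = y c - y x" using dual_linear[OF y(1)] by (simp add: linear_diff)
      ultimately show ?thesis using qe by simp
    qed
    then show ?thesis using P(1) y(1) by (simp add: normal_cone_def)
  qed
  moreover have "xs = (\<lambda>v. (xs - y) v + y v)" by auto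
  ultimately show "(x, xs) \<in> plus_normal \<tau> A C" unfolding plus_normal_def using inA by blast
qed

lemma H_eq_sup: "plus_normal \<tau> A C \<subseteq> {z \<in> topspace (Ztop \<tau>). H z = coupling z}"
proof
  fix z assume "z \<in> plus_normal \<tau> A C"
  then obtain x a n where z: "z = (x, \<lambda>y. a y + n y)" and A: "(x, a) \<in> A" and n: "n \<in> normal_cone \<tau> C x"
    unfolding plus_normal_def by blast
  have xC: "x \<in> C" and nd: "n \<in> dual \<tau>" and nc: "\<forall>c\<in>C. n (c - x) \<le> 0"
    using n by (auto simp: normal_cone_def split: if_splits)
  have ad: "a \<in> dual \<tau>" using A Asub by auto
  have zd: "snd z \<in> dual \<tau>" using z dual_add[OF ad nd] by simp
  have ha: "h (x, a) = ereal (a x)" using A h_eq by (auto simp: coupling_def)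
  have sn: "sigma C n \<le> ereal (n x)"
    unfolding sigma_def
  proof (rule Sup_least, clarify)
    fix c assume c: "c \<in> C"
    have "n (c - x) = n c - n x" using dual_linear[OF nd] by (simp add: linear_diff)
    moreover have "n (c - x) \<le> 0" using nc c by blast
    ultimately show "ereal (n c) \<le> ereal (n x)" by simp
  qed
  have "snd z - n = a" using z by auto
  then have "H z \<le> h (x, a) + sigma C n" unfolding H_def using F_C[of z n] xC z INF_lower[OF nd, of "F z"] by simp
  also have "\<dots> \<le> ereal (a x) + ereal (n x)" unfolding ha by (rule add_mono[OF order.refl sn])
  also have "\<dots> = coupling z" using z by (simp add: coupling_def)
  finally have "H z \<le> coupling z" .
  with H_ge_c[OF zd] have "H z = coupling z" by simp
  then show "z \<in> {z \<in> topspace (Ztop \<tau>). H z = coupling z}" using zd z by auto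
qed

lemma result: "representable \<tau> (plus_normal \<tau> A C)"
  unfolding representable_def
proof (intro exI[of _ H] conjI)
  show "\<forall>z\<in>topspace (Ztop \<tau>). H z \<noteq> -\<infinity>" using H_nm by auto
  have "(x0, \<lambda>y. a0 y + 0) \<in> plus_normal \<tau> A C"
    unfolding plus_normal_def using x0a0 x0C dual_0 by (force simp: normal_cone_def)
  then have "(x0, a0) \<in> {z \<in> topspace (Ztop \<tau>). H z = coupling z}" using H_eq_sup by auto
  then show "\<exists>z\<in>topspace (Ztop \<tau>). H z \<noteq> \<infinity>" by (intro bexI[of _ "(x0, a0)"]) (auto simp: coupling_def)
  show "\<forall>z\<in>topspace (Ztop \<tau>). \<forall>w\<in>topspace (Ztop \<tau>). \<forall>t::real. 0 < t \<and> t < 1 \<longrightarrow>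
            H (zcomb t z w) \<le> ereal t * H z + ereal (1 - t) * H w" using H_conv by blast
  show "\<forall>r::real. closedin (Ztop \<tau>) {z \<in> topspace (Ztop \<tau>). H z \<le> ereal r}"
    using lscf_closed[OF lsc_H] by blast
  show "\<forall>z\<in>topspace (Ztop \<tau>). coupling z \<le> H z" using H_ge_c by auto
  show "{z \<in> topspace (Ztop \<tau>). H z = coupling z} = plus_normal \<tau> A C"
    using H_eq_sub H_eq_sup by blast
qed

end


theorem theorem4p3:
  fixes \<tau> :: "'a::real_vector topology"
    and A :: "('a \<times> ('a \<Rightarrow> real)) set"
    and C :: "'a set"
  assumes "lcs \<tau>"
    and "\<exists>x::'a. x \<noteq> 0"
    and "A \<subseteq> UNIV \<times> dual \<tau>"
    and "representable \<tau> A"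
    and "closedin \<tau> C"
    and "convex C"
    and "Domain A \<inter> (\<tau> interior_of C) \<noteq> {}"
  shows "representable \<tau> (plus_normal \<tau> A C)"
proof -
  obtain h where h: "(\<forall>z\<in>topspace (Ztop \<tau>). h z \<noteq> -\<infinity>)"
    "(\<forall>z\<in>topspace (Ztop \<tau>). \<forall>w\<in>topspace (Ztop \<tau>). \<forall>t::real. 0 < t \<and> t < 1 \<longrightarrow>
            h (zcomb t z w) \<le> ereal t * h z + ereal (1 - t) * h w)"
    "(\<forall>r::real. closedin (Ztop \<tau>) {z \<in> topspace (Ztop \<tau>). h z \<le> ereal r})"
    "(\<forall>z\<in>topspace (Ztop \<tau>). coupling z \<le> h z)"
    "{z \<in> topspace (Ztop \<tau>). h z = coupling z} = A"
    using assms(4) unfolding representable_def by blast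
  obtain x0 where x0: "x0 \<in> Domain A" "x0 \<in> \<tau> interior_of C" using assms(7) by blast
  obtain a0 where a0: "(x0, a0) \<in> A" using x0(1) by blast
  obtain U where U: "openin \<tau> U" "x0 \<in> U" "U \<subseteq> C" using x0(2) by (auto simp: interior_of_def)
  define V where "V = {u \<in> topspace \<tau>. u + x0 \<in> U}"
  have oV: "openin \<tau> V" unfolding V_def by (rule openin_continuous_map_preimage[OF lcs_trans[OF assms(1)] U(1)])
  have V0: "0 \<in> V" using U(2) lcs_top[OF assms(1)] by (simp add: V_def)
  have VC: "\<forall>u\<in>V. x0 + u \<in> C" using U(3) by (auto simp: V_def add.commute)
  interpret S: sumset \<tau> A C h x0 a0 V
    by (unfold_locales) (use assms h a0 oV V0 VC in auto)
  show ?thesis by (rule S.result)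
qed

end
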